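(* With $d=\delta(1-\delta)$, $x(p)=\frac{p^2-d(1-p)^2}{p^2+d(1-p)^2}$ and $R_v^{\max}(n)=n\big(1-(1-x(p)^2)^{1/(2n)}\big)$ as the maximal saved resource for $n$ nodes (defined on the region $p^2\ge d(1-p)^2$, $p<1$), for every fixed $n\ge1$ and fixed $\delta\in[1/2,1)$, $R_v^{\max}(n)$ is a non-decreasing function of $p$ on that region; i.e., as the noisy state $\rho(p,\delta)$ becomes noisier (closer to the separable state $|01\rangle\langle01|$), the maximal saved resource increases.
   Context: $\rho(p,\delta)=p|01\rangle\langle01|+(1-p)|\zeta_\delta\rangle\langle\zeta_\delta|$ with $|\zeta_\delta\rangle=\sqrt\delta|00\rangle+\sqrt{1-\delta}|11\rangle$. In the $n$-node repeater where segment $S_1$ shares $\rho(p,\delta)$ and all $n$ free segments share the same pure state of concurrence $\mathcal{C}$, end-to-end optimal fully entangled fraction equal to that of $\rho(p,\delta)$ is achieved whenever $\frac{1+\sqrt{1-\mathcal{C}^{2n}}}{2}\le\frac{p^2}{p^2+d(1-p)^2}$; the saved resource is $R_v=n(1-\mathcal{C})$, and $R_v^{\max}(n)$ is its maximum over $\mathcal{C}$ satisfying this condition. *)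

theory Defs
  imports Complex_Main
begin

definition dpar :: "real \<Rightarrow> real" where
  "dpar \<delta> = \<delta> * (1 - \<delta>)"

definition xfun :: "real \<Rightarrow> real \<Rightarrow> real" where
  "xfun \<delta> p = (p^2 - dpar \<delta> * (1 - p)^2) / (p^2 + dpar \<delta> * (1 - p)^2)"

definition Rv_max :: "nat \<Rightarrow> real \<Rightarrow> real \<Rightarrow> real" where
  "Rv_max n \<delta> p = real n * (1 - (1 - (xfun \<delta> p)^2) powr (1 / (2 * real n)))"

definition region :: "real \<Rightarrow> real set" where
  "region \<delta> = {p. 0 \<le> p \<and> p < 1 \<and> dpar \<delta> * (1 - p)^2 \<le> p^2}"

end

theory Submission
  imports Defs
begin

lemma xmono:
  fixes d p q :: real
  assumes d: "d > 0" and p: "0 < p" "p \<le> q" "q < 1"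
  shows "(p^2 - d*(1-p)^2)/(p^2 + d*(1-p)^2) \<le> (q^2 - d*(1-q)^2)/(q^2 + d*(1-q)^2)"
proof -
  have a: "p^2 + d*(1-p)^2 > 0" using p d by (simp add: add_pos_nonneg)
  have b: "q^2 + d*(1-q)^2 > 0" using p d by (simp add: add_pos_nonneg)
  have c: "p*(1-q) \<le> q*(1-p)" using p by (simp add: algebra_simps)
  have c2: "(p*(1-q))^2 \<le> (q*(1-p))^2"
    using c p by (intro power_mono) auto
  have "(p^2 - d*(1-p)^2)*(q^2 + d*(1-q)^2) \<le> (q^2 - d*(1-q)^2)*(p^2 + d*(1-p)^2)"
  proof -
    have "(q^2 - d*(1-q)^2)*(p^2 + d*(1-p)^2) - (p^2 - d*(1-p)^2)*(q^2 + d*(1-q)^2)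
          = 2*d*((q*(1-p))^2 - (p*(1-q))^2)" by (simp add: algebra_simps power2_eq_square)
    also have "\<dots> \<ge> 0" using c2 d by simp
    finally show ?thesis by simp
  qed
  then show ?thesis using a b by (simp add: divide_simps)
qed

theorem mainTheorem7:
  fixes n :: nat and \<delta> :: real
  assumes "n \<ge> 1" and "1/2 \<le> \<delta>" and "\<delta> < 1"
  shows "mono_on (region \<delta>) (Rv_max n \<delta>)"
proof (rule mono_onI)
  fix p q assume pr: "p \<in> region \<delta>" and qr: "q \<in> region \<delta>" and pq: "p \<le> q"
  have d: "dpar \<delta> > 0" using assms unfolding dpar_def by simp
  have p0: "p \<noteq> 0" using pr d unfolding region_def by auto
  then have p: "0 < p" "q < 1" using pr qr unfolding region_def by auto
  have xle: "xfun \<delta> p \<le> xfun \<delta> q" unfolding xfun_def using xmono[OF d p(1) pq p(2)] .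
  have xp0: "0 \<le> xfun \<delta> p" using pr unfolding region_def xfun_def
    using d by (intro divide_nonneg_nonneg) (auto intro!: add_nonneg_nonneg)
  have xq1: "xfun \<delta> q \<le> 1" using d qr unfolding region_def xfun_def
    by (subst divide_le_eq_1) (auto intro: add_pos_nonneg)
  have sq: "(xfun \<delta> p)^2 \<le> (xfun \<delta> q)^2" using xle xp0 by (intro power_mono) auto
  have q1: "0 \<le> 1 - (xfun \<delta> q)^2" using xq1 xp0 xle
    by (metis abs_square_le_1 abs_of_nonneg diff_ge_0_iff_ge order_trans)
  have "(1 - (xfun \<delta> q)^2) powr (1 / (2 * real n)) \<le> (1 - (xfun \<delta> p)^2) powr (1 / (2 * real n))"
    using q1 sq by (intro powr_mono2) auto
  then show "Rv_max n \<delta> p \<le> Rv_max n \<delta> q" unfolding Rv_max_def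
    by (intro mult_left_mono) auto
qed

end
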